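(* Let $m,n,p,q,r,s$ be arbitrary integers. Let $$A(x_1,x_2,x_3,x_4)=\begin{bmatrix}x_1 & x_2 & x_3 & x_4\\ -nx_2 & x_1+mx_2 & -nx_4 & x_3+mx_4\\ -qx_3 & -qx_4 & x_1+px_3 & x_2+px_4\\ qnx_4 & -q(x_3+mx_4) & -nx_2-pnx_4 & x_1+mx_2+p(x_3+mx_4)\end{bmatrix}$$ and $$P(x_1,\dots,x_8)=\begin{bmatrix}A(x_1,\dots,x_4) & A(x_5,\dots,x_8)\\ -sA(x_5,\dots,x_8) & A(x_1,\dots,x_4)+rA(x_5,\dots,x_8)\end{bmatrix}.$$ Then for independent variables $x_i,y_i$, $P(x_1,\dots,x_8)P(y_1,\dots,y_8)=P(z_1,\dots,z_8)$, where $z_1,\dots,z_8$ are bilinear forms in the $x_i,y_i$ whose coefficients are integer polynomials in $m,n,p,q,r,s$; in particular $z_1=x_1y_1-nx_2y_2-qx_3y_3+qnx_4y_4-sx_5y_5+snx_6y_6+sqx_7y_7-sqnx_8y_8$. Consequently the octonary octic form $f=\det P$ satisfies $f(x_1,\dots,x_8)f(y_1,\dots,y_8)=f(z_1,\dots,z_8)$. *)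

theory Defs
  imports "Jordan_Normal_Form.Determinant"
begin

text \<open>Integer polynomial expressions in the six parameters m,n,p,q,r,s
  (variable indices 0..5 stand for m,n,p,q,r,s respectively).\<close>
datatype ipoly = PConst int | PVar nat | PAdd ipoly ipoly | PMul ipoly ipoly

fun ieval :: "int \<Rightarrow> int \<Rightarrow> int \<Rightarrow> int \<Rightarrow> int \<Rightarrow> int \<Rightarrow> ipoly \<Rightarrow> int" where
  "ieval m n p q r s (PConst c) = c"
| "ieval m n p q r s (PVar v) =
     (if v = 0 then m else if v = 1 then n else if v = 2 then p
      else if v = 3 then q else if v = 4 then r else s)"
| "ieval m n p q r s (PAdd a b) = ieval m n p q r s a + ieval m n p q r s b"
| "ieval m n p q r s (PMul a b) = ieval m n p q r s a * ieval m n p q r s b"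

definition Amat :: "int \<Rightarrow> int \<Rightarrow> int \<Rightarrow> int \<Rightarrow> int \<Rightarrow> int \<Rightarrow> int \<Rightarrow> int \<Rightarrow> int mat" where
  "Amat m n p q x1 x2 x3 x4 = mat_of_rows_list 4
     [[x1, x2, x3, x4],
      [- n * x2, x1 + m * x2, - n * x4, x3 + m * x4],
      [- q * x3, - q * x4, x1 + p * x3, x2 + p * x4],
      [q * n * x4, - q * (x3 + m * x4), - n * x2 - p * n * x4,
       x1 + m * x2 + p * (x3 + m * x4)]]"

definition Pmat :: "int \<Rightarrow> int \<Rightarrow> int \<Rightarrow> int \<Rightarrow> int \<Rightarrow> int \<Rightarrow> (nat \<Rightarrow> int) \<Rightarrow> int mat" where
  "Pmat m n p q r s x =
     (let A = Amat m n p q (x 1) (x 2) (x 3) (x 4);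
          B = Amat m n p q (x 5) (x 6) (x 7) (x 8)
      in four_block_mat A B ((- s) \<cdot>\<^sub>m B) (A + r \<cdot>\<^sub>m B))"

definition bilin :: "(nat \<Rightarrow> nat \<Rightarrow> nat \<Rightarrow> ipoly) \<Rightarrow> int \<Rightarrow> int \<Rightarrow> int \<Rightarrow> int \<Rightarrow> int \<Rightarrow> int
    \<Rightarrow> (nat \<Rightarrow> int) \<Rightarrow> (nat \<Rightarrow> int) \<Rightarrow> nat \<Rightarrow> int" where
  "bilin C m n p q r s x y k =
     (\<Sum>i\<in>{1..8}. \<Sum>j\<in>{1..8}. ieval m n p q r s (C k i j) * x i * y j)"

end

theory Submission
  imports Defs
begin

definition Cl :: "ipoly list list list" where
"Cl = [[[PConst (1), PConst 0, PConst 0, PConst 0, PConst 0, PConst 0, PConst 0, PConst 0], [PConst 0, PMul (PConst (-1)) (PVar 1), PConst 0, PConst 0, PConst 0, PConst 0, PConst 0, PConst 0], [PConst 0, PConst 0, PMul (PConst (-1)) (PVar 3), PConst 0, PConst 0, PConst 0, PConst 0, PConst 0], [PConst 0, PConst 0, PConst 0, PMul (PMul (PConst (1)) (PVar 1)) (PVar 3), PConst 0, PConst 0, PConst 0, PConst 0], [PConst 0, PConst 0, PConst 0, PConst 0, PMul (PConst (-1)) (PVar 5), PConst 0, PConst 0, PConst 0], [PConst 0, PConst 0, PConst 0, PConst 0, PConst 0, PMul (PMul (PConst (1)) (PVar 1)) (PVar 5), PConst 0, PConst 0], [PConst 0, PConst 0, PConst 0, PConst 0, PConst 0, PConst 0,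 PMul (PMul (PConst (1)) (PVar 3)) (PVar 5), PConst 0], [PConst 0, PConst 0, PConst 0, PConst 0, PConst 0, PConst 0, PConst 0, PMul (PMul (PMul (PConst (-1)) (PVar 1)) (PVar 3)) (PVar 5)]],
 [[PConst 0, PConst (1), PConst 0, PConst 0, PConst 0, PConst 0, PConst 0, PConst 0], [PConst (1), PMul (PConst (1)) (PVar 0), PConst 0, PConst 0, PConst 0, PConst 0, PConst 0, PConst 0], [PConst 0, PConst 0, PConst 0, PMul (PConst (-1)) (PVar 3), PConst 0, PConst 0, PConst 0, PConst 0], [PConst 0, PConst 0, PMul (PConst (-1)) (PVar 3), PMul (PMul (PConst (-1)) (PVar 0)) (PVar 3), PConst 0, PConst 0, PConst 0, PConst 0], [PConst 0, PConst 0, PConst 0, PConst 0, PConst 0, PMul (PConst (-1)) (PVar 5), PConst 0, PConst 0], [PConst 0, PConst 0, PConst 0, PConst 0, PMul (PConst (-1)) (PVar 5), PMul (PMul (PConst (-1)) (PVar 0)) (PVar 5), PConst 0, PConst 0], [PConst 0, PConst 0, PConst 0, PConst 0, PConst 0, PConst 0, PConst 0, PMul (PMul (PConst (1)) (PVar 3)) (PVar 5)], [PConst 0, PConst 0, PConst 0, PConst 0, PConst 0, PConst 0, PMul (PMul (PConst (1)) (PVar 3)) (PVar 5), PMul (PMul (PMul (PConst (1)) (PVar 0)) (PVar 3)) (PVar 5)]],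
 [[PConst 0, PConst 0, PConst (1), PConst 0, PConst 0, PConst 0, PConst 0, PConst 0], [PConst 0, PConst 0, PConst 0, PMul (PConst (-1)) (PVar 1), PConst 0, PConst 0, PConst 0, PConst 0], [PConst (1), PConst 0, PMul (PConst (1)) (PVar 2), PConst 0, PConst 0, PConst 0, PConst 0, PConst 0], [PConst 0, PMul (PConst (-1)) (PVar 1), PConst 0, PMul (PMul (PConst (-1)) (PVar 1)) (PVar 2), PConst 0, PConst 0, PConst 0, PConst 0], [PConst 0, PConst 0, PConst 0, PConst 0, PConst 0, PConst 0, PMul (PConst (-1)) (PVar 5), PConst 0], [PConst 0, PConst 0, PConst 0, PConst 0, PConst 0, PConst 0, PConst 0, PMul (PMul (PConst (1)) (PVar 1)) (PVar 5)], [PConst 0, PConst 0, PConst 0, PConst 0, PMul (PConst (-1)) (PVar 5), PConst 0, PMul (PMul (PConst (-1)) (PVar 2)) (PVar 5), PConst 0], [PConst 0, PConst 0, PConst 0, PConst 0, PConst 0, PMul (PMul (PConst (1)) (PVar 1)) (PVar 5), PConst 0, PMul (PMul (PMul (PConst (1)) (PVar 1)) (PVar 2)) (PVar 5)]],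
 [[PConst 0, PConst 0, PConst 0, PConst (1), PConst 0, PConst 0, PConst 0, PConst 0], [PConst 0, PConst 0, PConst (1), PMul (PConst (1)) (PVar 0), PConst 0, PConst 0, PConst 0, PConst 0], [PConst 0, PConst (1), PConst 0, PMul (PConst (1)) (PVar 2), PConst 0, PConst 0, PConst 0, PConst 0], [PConst (1), PMul (PConst (1)) (PVar 0), PMul (PConst (1)) (PVar 2), PMul (PMul (PConst (1)) (PVar 0)) (PVar 2), PConst 0, PConst 0, PConst 0, PConst 0], [PConst 0, PConst 0, PConst 0, PConst 0, PConst 0, PConst 0, PConst 0, PMul (PConst (-1)) (PVar 5)], [PConst 0, PConst 0, PConst 0, PConst 0, PConst 0, PConst 0, PMul (PConst (-1)) (PVar 5), PMul (PMul (PConst (-1)) (PVar 0)) (PVar 5)], [PConst 0, PConst 0, PConst 0, PConst 0, PConst 0, PMul (PConst (-1)) (PVar 5), PConst 0, PMul (PMul (PConst (-1)) (PVar 2)) (PVar 5)], [PConst 0, PConst 0, PConst 0, PConst 0, PMul (PConst (-1)) (PVar 5), PMul (PMul (PConst (-1)) (PVar 0)) (PVar 5), PMul (PMul (PConst (-1)) (PVar 2)) (PVar 5), PMul (PMul (PMul (PConst (-1)) (PVar 0)) (PVar 2)) (PVar 5)]],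
 [[PConst 0, PConst 0, PConst 0, PConst 0, PConst (1), PConst 0, PConst 0, PConst 0], [PConst 0, PConst 0, PConst 0, PConst 0, PConst 0, PMul (PConst (-1)) (PVar 1), PConst 0, PConst 0], [PConst 0, PConst 0, PConst 0, PConst 0, PConst 0, PConst 0, PMul (PConst (-1)) (PVar 3), PConst 0], [PConst 0, PConst 0, PConst 0, PConst 0, PConst 0, PConst 0, PConst 0, PMul (PMul (PConst (1)) (PVar 1)) (PVar 3)], [PConst (1), PConst 0, PConst 0, PConst 0, PMul (PConst (1)) (PVar 4), PConst 0, PConst 0, PConst 0], [PConst 0, PMul (PConst (-1)) (PVar 1), PConst 0, PConst 0, PConst 0, PMul (PMul (PConst (-1)) (PVar 1)) (PVar 4), PConst 0, PConst 0], [PConst 0, PConst 0, PMul (PConst (-1)) (PVar 3), PConst 0, PConst 0, PConst 0, PMul (PMul (PConst (-1)) (PVar 3)) (PVar 4), PConst 0], [PConst 0, PConst 0, PConst 0, PMul (PMul (PConst (1)) (PVar 1)) (PVar 3), PConst 0, PConst 0, PConst 0, PMul (PMul (PMul (PConst (1)) (PVar 1)) (PVar 3)) (PVar 4)]],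
 [[PConst 0, PConst 0, PConst 0, PConst 0, PConst 0, PConst (1), PConst 0, PConst 0], [PConst 0, PConst 0, PConst 0, PConst 0, PConst (1), PMul (PConst (1)) (PVar 0), PConst 0, PConst 0], [PConst 0, PConst 0, PConst 0, PConst 0, PConst 0, PConst 0, PConst 0, PMul (PConst (-1)) (PVar 3)], [PConst 0, PConst 0, PConst 0, PConst 0, PConst 0, PConst 0, PMul (PConst (-1)) (PVar 3), PMul (PMul (PConst (-1)) (PVar 0)) (PVar 3)], [PConst 0, PConst (1), PConst 0, PConst 0, PConst 0, PMul (PConst (1)) (PVar 4), PConst 0, PConst 0], [PConst (1), PMul (PConst (1)) (PVar 0), PConst 0, PConst 0, PMul (PConst (1)) (PVar 4), PMul (PMul (PConst (1)) (PVar 0)) (PVar 4), PConst 0, PConst 0], [PConst 0, PConst 0, PConst 0, PMul (PConst (-1)) (PVar 3), PConst 0, PConst 0, PConst 0, PMul (PMul (PConst (-1)) (PVar 3)) (PVar 4)], [PConst 0, PConst 0, PMul (PConst (-1)) (PVar 3), PMul (PMul (PConst (-1)) (PVar 0)) (PVar 3), PConst 0, PConst 0, PMul (PMul (PConst (-1)) (PVar 3)) (PVar 4), PMul (PMul (PMul (PConst (-1)) (PVar 0)) (PVar 3)) (PVar 4)]],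
 [[PConst 0, PConst 0, PConst 0, PConst 0, PConst 0, PConst 0, PConst (1), PConst 0], [PConst 0, PConst 0, PConst 0, PConst 0, PConst 0, PConst 0, PConst 0, PMul (PConst (-1)) (PVar 1)], [PConst 0, PConst 0, PConst 0, PConst 0, PConst (1), PConst 0, PMul (PConst (1)) (PVar 2), PConst 0], [PConst 0, PConst 0, PConst 0, PConst 0, PConst 0, PMul (PConst (-1)) (PVar 1), PConst 0, PMul (PMul (PConst (-1)) (PVar 1)) (PVar 2)], [PConst 0, PConst 0, PConst (1), PConst 0, PConst 0, PConst 0, PMul (PConst (1)) (PVar 4), PConst 0], [PConst 0, PConst 0, PConst 0, PMul (PConst (-1)) (PVar 1), PConst 0, PConst 0, PConst 0, PMul (PMul (PConst (-1)) (PVar 1)) (PVar 4)], [PConst (1), PConst 0, PMul (PConst (1)) (PVar 2), PConst 0, PMul (PConst (1)) (PVar 4), PConst 0, PMul (PMul (PConst (1)) (PVar 2)) (PVar 4), PConst 0], [PConst 0, PMul (PConst (-1)) (PVar 1), PConst 0, PMul (PMul (PConst (-1)) (PVar 1)) (PVar 2), PConst 0, PMul (PMul (PConst (-1)) (PVar 1)) (PVar 4), PConst 0, PMul (PMul (PMul (PConst (-1)) (PVar 1)) (PVar 2)) (PVar 4)]],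
 [[PConst 0, PConst 0, PConst 0, PConst 0, PConst 0, PConst 0, PConst 0, PConst (1)], [PConst 0, PConst 0, PConst 0, PConst 0, PConst 0, PConst 0, PConst (1), PMul (PConst (1)) (PVar 0)], [PConst 0, PConst 0, PConst 0, PConst 0, PConst 0, PConst (1), PConst 0, PMul (PConst (1)) (PVar 2)], [PConst 0, PConst 0, PConst 0, PConst 0, PConst (1), PMul (PConst (1)) (PVar 0), PMul (PConst (1)) (PVar 2), PMul (PMul (PConst (1)) (PVar 0)) (PVar 2)], [PConst 0, PConst 0, PConst 0, PConst (1), PConst 0, PConst 0, PConst 0, PMul (PConst (1)) (PVar 4)], [PConst 0, PConst 0, PConst (1), PMul (PConst (1)) (PVar 0), PConst 0, PConst 0, PMul (PConst (1)) (PVar 4), PMul (PMul (PConst (1)) (PVar 0)) (PVar 4)], [PConst 0, PConst (1), PConst 0, PMul (PConst (1)) (PVar 2), PConst 0, PMul (PConst (1)) (PVar 4), PConst 0, PMul (PMul (PConst (1)) (PVar 2)) (PVar 4)], [PConst (1), PMul (PConst (1)) (PVar 0), PMul (PConst (1)) (PVar 2), PMul (PMul (PConst (1)) (PVar 0)) (PVar 2), PMul (PConst (1)) (PVar 4), PMul (PMul (PConst (1)) (PVar 0)) (PVar 4), PMul (PMul (PConst (1)) (PVar 2)) (PVar 4), PMul (PMul (PMul (PConst (1)) (PVar 0)) (PVar 2)) (PVar 4)]]]"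

definition Cf :: "nat \<Rightarrow> nat \<Rightarrow> nat \<Rightarrow> ipoly" where
"Cf k i j = (if 1 \<le> k \<and> k \<le> 8 \<and> 1 \<le> i \<and> i \<le> 8 \<and> 1 \<le> j \<and> j \<le> 8 then Cl ! (k-1) ! (i-1) ! (j-1) else PConst 0)"

definition PL :: "int \<Rightarrow> int \<Rightarrow> int \<Rightarrow> int \<Rightarrow> int \<Rightarrow> int \<Rightarrow> (nat \<Rightarrow> int) \<Rightarrow> int list list" where
"PL m n p q r s x = [[((x 1)), ((x 2)), ((x 3)), ((x 4)), ((x 5)), ((x 6)), ((x 7)), ((x 8))],
 [((-1)*n*(x 2)), ((x 1) + m*(x 2)), ((-1)*n*(x 4)), ((x 3) + m*(x 4)), ((-1)*n*(x 6)), ((x 5) + m*(x 6)), ((-1)*n*(x 8)), ((x 7) + m*(x 8))],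
 [((-1)*q*(x 3)), ((-1)*q*(x 4)), ((x 1) + p*(x 3)), ((x 2) + p*(x 4)), ((-1)*q*(x 7)), ((-1)*q*(x 8)), ((x 5) + p*(x 7)), ((x 6) + p*(x 8))],
 [(n*q*(x 4)), ((-1)*q*(x 3) + (-1)*m*q*(x 4)), ((-1)*n*(x 2) + (-1)*n*p*(x 4)), ((x 1) + p*(x 3) + m*(x 2) + m*p*(x 4)), (n*q*(x 8)), ((-1)*q*(x 7) + (-1)*m*q*(x 8)), ((-1)*n*(x 6) + (-1)*n*p*(x 8)), ((x 5) + p*(x 7) + m*(x 6) + m*p*(x 8))],
 [((-1)*s*(x 5)), ((-1)*s*(x 6)), ((-1)*s*(x 7)), ((-1)*s*(x 8)), ((x 1) + r*(x 5)), ((x 2) + r*(x 6)), ((x 3) + r*(x 7)), ((x 4) + r*(x 8))],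
 [(n*s*(x 6)), ((-1)*s*(x 5) + (-1)*m*s*(x 6)), (n*s*(x 8)), ((-1)*s*(x 7) + (-1)*m*s*(x 8)), ((-1)*n*(x 2) + (-1)*n*r*(x 6)), ((x 1) + r*(x 5) + m*(x 2) + m*r*(x 6)), ((-1)*n*(x 4) + (-1)*n*r*(x 8)), ((x 3) + r*(x 7) + m*(x 4) + m*r*(x 8))],
 [(q*s*(x 7)), (q*s*(x 8)), ((-1)*s*(x 5) + (-1)*p*s*(x 7)), ((-1)*s*(x 6) + (-1)*p*s*(x 8)), ((-1)*q*(x 3) + (-1)*q*r*(x 7)), ((-1)*q*(x 4) + (-1)*q*r*(x 8)), ((x 1) + r*(x 5) + p*(x 3) + p*r*(x 7)), ((x 2) + r*(x 6) + p*(x 4) + p*r*(x 8))],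
 [((-1)*n*q*s*(x 8)), (q*s*(x 7) + m*q*s*(x 8)), (n*s*(x 6) + n*p*s*(x 8)), ((-1)*s*(x 5) + (-1)*p*s*(x 7) + (-1)*m*s*(x 6) + (-1)*m*p*s*(x 8)), (n*q*(x 4) + n*q*r*(x 8)), ((-1)*q*(x 3) + (-1)*q*r*(x 7) + (-1)*m*q*(x 4) + (-1)*m*q*r*(x 8)), ((-1)*n*(x 2) + (-1)*n*r*(x 6) + (-1)*n*p*(x 4) + (-1)*n*p*r*(x 8)), ((x 1) + r*(x 5) + p*(x 3) + p*r*(x 7) + m*(x 2) + m*r*(x 6) + m*p*(x 4) + m*p*r*(x 8))]]"

definition zf :: "int \<Rightarrow> int \<Rightarrow> int \<Rightarrow> int \<Rightarrow> int \<Rightarrow> int \<Rightarrow> (nat \<Rightarrow> int) \<Rightarrow> (nat \<Rightarrow> int) \<Rightarrow> nat \<Rightarrow> int" where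
"zf m n p q r s x y k = (if k = 1 then ((x 1)*(y 1) + (-1)*s*(x 5)*(y 5) + (-1)*q*(x 3)*(y 3) + q*s*(x 7)*(y 7) + (-1)*n*(x 2)*(y 2) + n*s*(x 6)*(y 6) + n*q*(x 4)*(y 4) + (-1)*n*q*s*(x 8)*(y 8)) else if k = 2 then ((x 2)*(y 1) + (x 1)*(y 2) + (-1)*s*(x 6)*(y 5) + (-1)*s*(x 5)*(y 6) + (-1)*q*(x 4)*(y 3) + (-1)*q*(x 3)*(y 4) + q*s*(x 8)*(y 7) + q*s*(x 7)*(y 8) + m*(x 2)*(y 2) + (-1)*m*s*(x 6)*(y 6) + (-1)*m*q*(x 4)*(y 4) + m*q*s*(x 8)*(y 8)) else if k = 3 then ((x 3)*(y 1) + (x 1)*(y 3) + (-1)*s*(x 7)*(y 5) + (-1)*s*(x 5)*(y 7) + p*(x 3)*(y 3) + (-1)*p*s*(x 7)*(y 7) + (-1)*n*(x 4)*(y 2) + (-1)*n*(x 2)*(y 4) + n*s*(x 8)*(y 6) + n*s*(x 6)*(y 8) + (-1)*n*p*(x 4)*(y 4) + n*p*s*(x 8)*(y 8)) else if k = 4 then ((x 4)*(y 1) + (x 3)*(y 2) + (x 2)*(y 3) + (x 1)*(y 4) + (-1)*s*(x 8)*(y 5) + (-1)*s*(x 7)*(y 6) + (-1)*s*(x 6)*(y 7) + (-1)*s*(x 5)*(y 8) + p*(x 4)*(y 3) + p*(x 3)*(y 4) + (-1)*p*s*(x 8)*(y 7) + (-1)*p*s*(x 7)*(y 8) + m*(x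 4)*(y 2) + m*(x 2)*(y 4) + (-1)*m*s*(x 8)*(y 6) + (-1)*m*s*(x 6)*(y 8) + m*p*(x 4)*(y 4) + (-1)*m*p*s*(x 8)*(y 8)) else if k = 5 then ((x 5)*(y 1) + (x 1)*(y 5) + r*(x 5)*(y 5) + (-1)*q*(x 7)*(y 3) + (-1)*q*(x 3)*(y 7) + (-1)*q*r*(x 7)*(y 7) + (-1)*n*(x 6)*(y 2) + (-1)*n*(x 2)*(y 6) + (-1)*n*r*(x 6)*(y 6) + n*q*(x 8)*(y 4) + n*q*(x 4)*(y 8) + n*q*r*(x 8)*(y 8)) else if k = 6 then ((x 6)*(y 1) + (x 5)*(y 2) + (x 2)*(y 5) + (x 1)*(y 6) + r*(x 6)*(y 5) + r*(x 5)*(y 6) + (-1)*q*(x 8)*(y 3) + (-1)*q*(x 7)*(y 4) + (-1)*q*(x 4)*(y 7) + (-1)*q*(x 3)*(y 8) + (-1)*q*r*(x 8)*(y 7) + (-1)*q*r*(x 7)*(y 8) + m*(x 6)*(y 2) + m*(x 2)*(y 6) + m*r*(x 6)*(y 6) + (-1)*m*q*(x 8)*(y 4) + (-1)*m*q*(x 4)*(y 8) + (-1)*m*q*r*(x 8)*(y 8)) else if k = 7 then ((x 7)*(y 1) + (x 5)*(y 3) + (x 3)*(y 5) + (x 1)*(y 7) + r*(x 7)*(y 5) + r*(x 5)*(y 7) + p*(x 7)*(y 3) + p*(x 3)*(y 7) + p*r*(x 7)*(y 7) + (-1)*n*(x 8)*(y 2) + (-1)*n*(x 6)*(y 4) + (-1)*n*(x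 4)*(y 6) + (-1)*n*(x 2)*(y 8) + (-1)*n*r*(x 8)*(y 6) + (-1)*n*r*(x 6)*(y 8) + (-1)*n*p*(x 8)*(y 4) + (-1)*n*p*(x 4)*(y 8) + (-1)*n*p*r*(x 8)*(y 8)) else if k = 8 then ((x 8)*(y 1) + (x 7)*(y 2) + (x 6)*(y 3) + (x 5)*(y 4) + (x 4)*(y 5) + (x 3)*(y 6) + (x 2)*(y 7) + (x 1)*(y 8) + r*(x 8)*(y 5) + r*(x 7)*(y 6) + r*(x 6)*(y 7) + r*(x 5)*(y 8) + p*(x 8)*(y 3) + p*(x 7)*(y 4) + p*(x 4)*(y 7) + p*(x 3)*(y 8) + p*r*(x 8)*(y 7) + p*r*(x 7)*(y 8) + m*(x 8)*(y 2) + m*(x 6)*(y 4) + m*(x 4)*(y 6) + m*(x 2)*(y 8) + m*r*(x 8)*(y 6) + m*r*(x 6)*(y 8) + m*p*(x 8)*(y 4) + m*p*(x 4)*(y 8) + m*p*r*(x 8)*(y 8)) else 0)"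

lemma sum8: "(\<Sum>k<8. (f::nat\<Rightarrow>int) k) = f 0 + f 1 + f 2 + f 3 + f 4 + f 5 + f 6 + f 7"
  by (simp add: numeral_eq_Suc)

lemma sum18: "(\<Sum>k\<in>{1..8}. (f::nat\<Rightarrow>int) k) = f 1 + f 2 + f 3 + f 4 + f 5 + f 6 + f 7 + f 8"
  by (simp add: numeral_eq_Suc)

lemma lt8: "(i::nat) < 8 \<Longrightarrow> i = 0 \<or> i = 1 \<or> i = 2 \<or> i = 3 \<or> i = 4 \<or> i = 5 \<or> i = 6 \<or> i = 7"
  by auto

lemma bilin_eq: "bilin Cf m n p q r s x y = zf m n p q r s x y"
proof
  fix k
  show "bilin Cf m n p q r s x y k = zf m n p q r s x y k"
  proof (cases "1 \<le> k \<and> k \<le> 8")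
    case True
    then have "k = 1 \<or> k = 2 \<or> k = 3 \<or> k = 4 \<or> k = 5 \<or> k = 6 \<or> k = 7 \<or> k = 8" by auto
    then show ?thesis
      unfolding bilin_def sum18 by (elim disjE; simp add: Cf_def Cl_def zf_def; simp add: algebra_simps)
  next
    case False
    then show ?thesis by (auto simp: bilin_def Cf_def zf_def)
  qed
qed

lemma Pmat_eq: "Pmat m n p q r s x = mat 8 8 (\<lambda>(i,j). PL m n p q r s x ! i ! j)"
proof (rule eq_matI)
  fix i j assume i: "i < dim_row (mat 8 8 (\<lambda>(i,j). PL m n p q r s x ! i ! j))"
    and j: "j < dim_col (mat 8 8 (\<lambda>(i,j). PL m n p q r s x ! i ! j))"
  from i j have "i < 8" "j < 8" by auto
  then show "Pmat m n p q r s x $$ (i, j) = mat 8 8 (\<lambda>(i,j). PL m n p q r s x ! i ! j) $$ (i, j)"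
    by (auto dest!: lt8 simp: Pmat_def Amat_def mat_of_rows_list_def PL_def Let_def algebra_simps)
qed (auto simp: Pmat_def Amat_def mat_of_rows_list_def Let_def)

lemma prod_entry: "i < 8 \<Longrightarrow> j < 8 \<Longrightarrow> (mat 8 8 f * mat 8 8 g) $$ (i,j) = (\<Sum>k<8. f(i,k) * (g(k,j) :: int))"
  by (simp add: scalar_prod_def atLeast0LessThan)

lemma prod_eq: "Pmat m n p q r s x * Pmat m n p q r s y = Pmat m n p q r s (zf m n p q r s x y)"
  unfolding Pmat_eq
proof (rule eq_matI)
  fix i j assume i: "i < dim_row (mat 8 8 (\<lambda>(i,j). PL m n p q r s (zf m n p q r s x y) ! i ! j))"
    and j: "j < dim_col (mat 8 8 (\<lambda>(i,j). PL m n p q r s (zf m n p q r s x y) ! i ! j))"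
  from i j have i8: "i < 8" and j8: "j < 8" by auto
  show "(mat 8 8 (\<lambda>(i,j). PL m n p q r s x ! i ! j) * mat 8 8 (\<lambda>(i,j). PL m n p q r s y ! i ! j)) $$ (i, j) =
    mat 8 8 (\<lambda>(i,j). PL m n p q r s (zf m n p q r s x y) ! i ! j) $$ (i, j)"
    unfolding prod_entry[OF i8 j8] using lt8[OF i8] lt8[OF j8]
    by (elim disjE; simp add: sum8 PL_def zf_def; simp add: algebra_simps)
qed auto

theorem mainTheorem10:
  "\<exists>C :: nat \<Rightarrow> nat \<Rightarrow> nat \<Rightarrow> ipoly.
     \<forall>(m::int) n p q r s (x::nat \<Rightarrow> int) (y::nat \<Rightarrow> int).
       (let z = bilin C m n p q r s x y in
          Pmat m n p q r s x * Pmat m n p q r s y = Pmat m n p q r s z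
        \<and> z 1 = x 1 * y 1 - n * x 2 * y 2 - q * x 3 * y 3 + q * n * x 4 * y 4
              - s * x 5 * y 5 + s * n * x 6 * y 6 + s * q * x 7 * y 7
              - s * q * n * x 8 * y 8
        \<and> det (Pmat m n p q r s x) * det (Pmat m n p q r s y)
            = det (Pmat m n p q r s z))"
proof (intro exI[of _ Cf] allI)
  fix m n p q r s :: int and x y :: "nat \<Rightarrow> int"
  have dims: "Pmat m n p q r s x \<in> carrier_mat 8 8" "Pmat m n p q r s y \<in> carrier_mat 8 8"
    by (simp_all add: Pmat_eq)
  show "let z = bilin Cf m n p q r s x y in
          Pmat m n p q r s x * Pmat m n p q r s y = Pmat m n p q r s z
        \<and> z 1 = x 1 * y 1 - n * x 2 * y 2 - q * x 3 * y 3 + q * n * x 4 * y 4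
              - s * x 5 * y 5 + s * n * x 6 * y 6 + s * q * x 7 * y 7
              - s * q * n * x 8 * y 8
        \<and> det (Pmat m n p q r s x) * det (Pmat m n p q r s y)
            = det (Pmat m n p q r s z)"
    unfolding bilin_eq Let_def
    using prod_eq[of m n p q r s x y] det_mult[OF dims]
    by (simp add: zf_def algebra_simps)
qed

end
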